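(* Let $n \geq 1$. If $\Psi : \mathbf{R}^n \to \mathbf{R}^n$ is a primitive linear map (with respect to the Lorentz cone $\mathcal{L}_n$), then $\gamma(\Psi) \leq n$. Moreover, there exists a primitive linear map $\Psi : \mathbf{R}^n \to \mathbf{R}^n$ such that $\gamma(\Psi) = n$.
   Context: The $n$-dimensional Lorentz cone is $\mathcal{L}_n = \{(x_1,\dots,x_n) \in \mathbf{R}^n : x_n \geq (x_1^2+\dots+x_{n-1}^2)^{1/2}\}$, with interior $\mathrm{int}(\mathcal{L}_n)$. A linear map $\Psi : \mathbf{R}^n \to \mathbf{R}^n$ is positive if $\Psi(\mathcal{L}_n) \subset \mathcal{L}_n$, strictly positive if $\Psi(\mathcal{L}_n \setminus \{0\}) \subset \mathrm{int}(\mathcal{L}_n)$, and primitive if it is positive and there exists an integer $k \geq 1$ such that $\Psi^k$ is strictly positive. For primitive $\Psi$, $\gamma(\Psi)$ (the primitivity index) is the smallest such $k$. *)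

theory Defs
  imports "HOL-Analysis.Analysis"
begin

text \<open>R^n is modelled as real^'n with CARD('n) = n; the index type carries a
well-order so that the "last" coordinate x_n is the greatest index.\<close>

definition last_idx :: "'n::{finite,wellorder}" where
  "last_idx = (GREATEST i. True)"

definition lorentz_cone :: "(real^'n::{finite,wellorder}) set" where
  "lorentz_cone = {x. x $ (last_idx::'n::{finite,wellorder}) \<ge> sqrt (\<Sum>i\<in>UNIV - {last_idx::'n::{finite,wellorder}}. (x $ i)^2)}"

definition positive_map :: "(real^('n::{finite,wellorder}) \<Rightarrow> real^('n::{finite,wellorder})) \<Rightarrow> bool" where
  "positive_map \<Psi> \<longleftrightarrow> \<Psi> ` lorentz_cone \<subseteq> lorentz_cone"

definition strictly_positive_map :: "(real^('n::{finite,wellorder}) \<Rightarrow> real^('n::{finite,wellorder})) \<Rightarrow> bool" where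
  "strictly_positive_map \<Psi> \<longleftrightarrow> \<Psi> ` (lorentz_cone - {0}) \<subseteq> interior lorentz_cone"

definition primitive_map :: "(real^('n::{finite,wellorder}) \<Rightarrow> real^('n::{finite,wellorder})) \<Rightarrow> bool" where
  "primitive_map \<Psi> \<longleftrightarrow> positive_map \<Psi> \<and> (\<exists>k::nat. k \<ge> 1 \<and> strictly_positive_map (\<Psi> ^^ k))"

definition primitivity_index :: "(real^('n::{finite,wellorder}) \<Rightarrow> real^('n::{finite,wellorder})) \<Rightarrow> nat" where
  "primitivity_index \<Psi> = (LEAST k::nat. k \<ge> 1 \<and> strictly_positive_map (\<Psi> ^^ k))"

end

theory Submission
  imports Defs "HOL-Analysis.Analysis"
begin



definition Sp :: "real^'n::{finite,wellorder} \<Rightarrow> real" where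
  "Sp x = (\<Sum>i\<in>UNIV - {last_idx::'n}. (x $ i)^2)"

definition qf :: "real^'n::{finite,wellorder} \<Rightarrow> real" where
  "qf x = (x $ (last_idx::'n))^2 - Sp x"

definition bq :: "real^'n::{finite,wellorder} \<Rightarrow> real^'n::{finite,wellorder} \<Rightarrow> real" where
  "bq x y = x $ (last_idx::'n) * y $ last_idx - (\<Sum>i\<in>UNIV - {last_idx::'n}. x $ i * y $ i)"

lemma Sp_nonneg: "Sp x \<ge> 0"
  unfolding Sp_def by (simp add: sum_nonneg)

lemma L_iff: "x \<in> lorentz_cone \<longleftrightarrow> x $ last_idx \<ge> 0 \<and> qf x \<ge> 0"
proof -
  have "sqrt (Sp x) \<le> x $ last_idx \<longleftrightarrow> x $ last_idx \<ge> 0 \<and> Sp x \<le> (x $ last_idx)^2"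
    using Sp_nonneg[of x] real_sqrt_le_iff'[of "Sp x"]
    by (metis order.trans real_sqrt_ge_zero)
  then show ?thesis unfolding lorentz_cone_def qf_def Sp_def[symmetric] by auto
qed

lemma interior_L: "interior lorentz_cone = {x::real^'n::{finite,wellorder}. sqrt (Sp x) < x $ last_idx}"
proof
  show "{x. sqrt (Sp x) < x $ last_idx} \<subseteq> interior lorentz_cone"
  proof (rule interior_maximal)
    show "open {x. sqrt (Sp x) < x $ last_idx}"
      unfolding Sp_def by (intro open_Collect_less continuous_intros)
  qed (auto simp: lorentz_cone_def Sp_def)
  show "interior lorentz_cone \<subseteq> {x. sqrt (Sp x) < x $ last_idx}"
  proof
    fix x assume "x \<in> interior lorentz_cone"
    then obtain e where e: "e > 0" "ball x e \<subseteq> lorentz_cone"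
      using mem_interior by blast
    define y where "y = x - (e/2) *\<^sub>R axis last_idx 1"
    have "dist x y < e" using e(1) by (simp add: y_def dist_norm)
    then have "y \<in> lorentz_cone" using e(2) by auto
    moreover have "Sp y = Sp x" unfolding Sp_def y_def
      by (intro sum.cong) (auto simp: axis_def)
    moreover have "y $ last_idx = x $ last_idx - e/2" by (simp add: y_def axis_def)
    ultimately have "sqrt (Sp x) \<le> x $ last_idx - e/2" unfolding lorentz_cone_def Sp_def by auto
    then show "x \<in> {x. sqrt (Sp x) < x $ last_idx}" using e(1) by auto
  qed
qed

lemma int_iff: "x \<in> interior lorentz_cone \<longleftrightarrow> x $ last_idx > 0 \<and> qf x > 0"
proof -
  have "sqrt (Sp x) < x $ last_idx \<longleftrightarrow> x $ last_idx > 0 \<and> Sp x < (x $ last_idx)^2"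
  proof
    assume a: "sqrt (Sp x) < x $ last_idx"
    then have p: "x $ last_idx > 0" using real_sqrt_ge_zero[OF Sp_nonneg[of x]] by linarith
    have "(sqrt (Sp x))^2 < (x $ last_idx)^2" using a real_sqrt_ge_zero[OF Sp_nonneg[of x]]
      by (intro power_strict_mono) auto
    then show "x $ last_idx > 0 \<and> Sp x < (x $ last_idx)^2" using p Sp_nonneg[of x] by simp
  next
    assume a: "x $ last_idx > 0 \<and> Sp x < (x $ last_idx)^2"
    then have "sqrt (Sp x) < sqrt ((x $ last_idx)^2)" using real_sqrt_less_iff by blast
    then show "sqrt (Sp x) < x $ last_idx" using a by simp
  qed
  then show ?thesis unfolding interior_L qf_def by auto
qed

lemma L_int_iff:
  assumes x: "x \<in> lorentz_cone"
  shows "x \<in> interior lorentz_cone \<longleftrightarrow> qf x > 0"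
proof
  assume "x \<in> interior lorentz_cone"
  then show "qf x > 0" using int_iff by blast
next
  assume q: "qf x > 0"
  have l: "x $ last_idx \<ge> 0" using x L_iff by blast
  have "(x $ last_idx)^2 > 0" using q Sp_nonneg[of x] unfolding qf_def by linarith
  then have "x $ last_idx \<noteq> 0" by auto
  then have "x $ last_idx > 0" using l by linarith
  then show "x \<in> interior lorentz_cone" using int_iff q by blast
qed


lemma qf_bq: "qf x = bq x x"
  unfolding qf_def bq_def Sp_def by (simp add: power2_eq_square)

lemma bq_sym: "bq x y = bq y x"
  unfolding bq_def by (simp add: mult.commute)

lemma bq_lin: "bq (s *\<^sub>R x + t *\<^sub>R y) z = s * bq x z + t * bq y z"
  unfolding bq_def by (simp add: algebra_simps sum.distrib sum_distrib_left)

lemma qf_comb: "qf (s *\<^sub>R x + t *\<^sub>R y) = s^2 * qf x + 2 * s * t * bq x y + t^2 * qf y"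
proof -
  have "qf (s *\<^sub>R x + t *\<^sub>R y) = s * bq x (s *\<^sub>R x + t *\<^sub>R y) + t * bq y (s *\<^sub>R x + t *\<^sub>R y)"
    unfolding qf_bq bq_lin ..
  also have "\<dots> = s * (s * bq x x + t * bq y x) + t * (s * bq x y + t * bq y y)"
  proof -
    have 1: "bq x (s *\<^sub>R x + t *\<^sub>R y) = s * bq x x + t * bq y x"
      using bq_lin[of s x t y x] bq_sym[of x "s *\<^sub>R x + t *\<^sub>R y"] by simp
    have 2: "bq y (s *\<^sub>R x + t *\<^sub>R y) = s * bq x y + t * bq y y"
      using bq_lin[of s x t y y] bq_sym[of y "s *\<^sub>R x + t *\<^sub>R y"] by simp
    show ?thesis unfolding 1 2 ..
  qed
  finally show ?thesis unfolding qf_bq by (simp add: bq_sym[of y x] power2_eq_square algebra_simps)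
qed

lemma qf_scale: "qf (c *\<^sub>R x) = c^2 * qf x"
  using qf_comb[of c x 0 x] by simp

lemma two_d:
  fixes a b c al be ga :: real
  assumes a: "a < 0" and c: "c > 0"
    and H: "\<And>s. a * s^2 + 2 * b * s + c \<ge> 0 \<Longrightarrow> al * s^2 + 2 * be * s + ga \<ge> 0"
  shows "al * c \<ge> ga * a"
proof -
  define d where "d = sqrt (b^2 - a * c)"
  have dpos: "b^2 - a*c > b^2" using a c by (simp add: mult_neg_pos)
  have "b^2 - a*c \<ge> 0" using dpos zero_le_power2[of b] by linarith
  then have d2: "d^2 = b^2 - a*c" unfolding d_def by (rule real_sqrt_pow2)
  have dgt: "d > \<bar>b\<bar>" unfolding d_def using dpos real_less_rsqrt[of "\<bar>b\<bar>" "b^2 - a*c"]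
    by simp
  define s1 where "s1 = (- b - d) / a"
  define s2 where "s2 = (- b + d) / a"
  have s1: "s1 > 0" unfolding s1_def using a dgt by (intro divide_neg_neg) auto
  have s2: "s2 < 0" unfolding s2_def using a dgt by (intro divide_pos_neg) auto
  have r1: "a * s1^2 + 2 * b * s1 + c = 0" unfolding s1_def using a d2
    by (simp add: field_simps power2_eq_square) (simp only: distrib_left[symmetric])
  have r2: "a * s2^2 + 2 * b * s2 + c = 0" unfolding s2_def using a d2
    by (simp add: field_simps power2_eq_square) (simp only: distrib_left[symmetric])
  have prod: "s1 * s2 = c / a" unfolding s1_def s2_def using a d2
    by (simp add: field_simps power2_eq_square) (simp only: distrib_left[symmetric])
  have P1: "al * s1^2 + 2 * be * s1 + ga \<ge> 0" using H r1 by simp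
  have P2: "al * s2^2 + 2 * be * s2 + ga \<ge> 0" using H r2 by simp
  have iden: "(ga - al * s1 * s2) * (s1 - s2) = s1 * (al * s2^2 + 2 * be * s2 + ga) - s2 * (al * s1^2 + 2 * be * s1 + ga)"
    by (simp add: algebra_simps power2_eq_square)
  have "s1 * (al * s2^2 + 2 * be * s2 + ga) - s2 * (al * s1^2 + 2 * be * s1 + ga) \<ge> 0"
  proof -
    have "s1 * (al * s2^2 + 2 * be * s2 + ga) \<ge> 0" using s1 P2 by simp
    moreover have "s2 * (al * s1^2 + 2 * be * s1 + ga) \<le> 0" using s2 P1 by (simp add: mult_nonpos_nonneg)
    ultimately show ?thesis by linarith
  qed
  then have "(ga - al * s1 * s2) * (s1 - s2) \<ge> 0" using iden by simp
  then have "ga - al * s1 * s2 \<ge> 0" using s1 s2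
    by (simp add: zero_le_mult_iff)
  then have "ga \<ge> al * (c / a)" using prod by (simp add: mult.assoc)
  then have "al * c / a \<le> ga" by simp
  then show ?thesis using a by (simp add: divide_le_eq mult.commute)
qed


lemma qf_neg: "qf (- x) = qf x"
  using qf_scale[of "-1" x] by simp

lemma qf_pos_map:
  assumes lin: "linear \<Psi>" and pos: "positive_map \<Psi>" and q: "qf x \<ge> 0"
  shows "qf (\<Psi> x) \<ge> 0"
proof (cases "x $ last_idx \<ge> 0")
  case True
  then have "x \<in> lorentz_cone" using q L_iff by blast
  then have "\<Psi> x \<in> lorentz_cone" using pos unfolding positive_map_def by blast
  then show ?thesis using L_iff by blast
next
  case False
  then have "- x \<in> lorentz_cone" using q L_iff[of "-x"] qf_neg[of x] by auto
  then have "\<Psi> (- x) \<in> lorentz_cone" using pos unfolding positive_map_def by blast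
  then have "qf (- \<Psi> x) \<ge> 0" using L_iff linear_neg[OF lin] by metis
  then show ?thesis using qf_neg by metis
qed

lemma ratio_ineq:
  fixes a c al ga :: real
  assumes "a < 0" "c > 0" "al * c \<ge> ga * a"
  shows "al / a \<le> ga / c"
  using assms by (simp add: divide_simps mult.commute)

lemma S_lemma:
  fixes \<Psi> :: "real^'n::{finite,wellorder} \<Rightarrow> real^'n::{finite,wellorder}"
  assumes lin: "linear \<Psi>" and pos: "positive_map \<Psi>"
  shows "\<exists>\<mu>\<ge>0. \<forall>x. qf (\<Psi> x) \<ge> \<mu> * qf x"
proof -
  define R where "R = {qf (\<Psi> y) / qf y | y. qf y > 0}"
  define e :: "real^'n::{finite,wellorder}" where "e = axis last_idx 1"
  have qe: "qf e = 1" unfolding e_def qf_def Sp_def by (simp add: axis_def)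
  have Rne: "R \<noteq> {}" unfolding R_def
  proof -
    have "qf (\<Psi> e) / qf e \<in> {qf (\<Psi> y) / qf y |y. 0 < qf y}" using qe by (auto intro!: exI[of _ e])
    then show "{qf (\<Psi> y) / qf y |y. 0 < qf y} \<noteq> {}" by blast
  qed
  have Rlb: "\<forall>r\<in>R. 0 \<le> r" unfolding R_def using qf_pos_map[OF lin pos]
    by (auto intro!: divide_nonneg_pos)
  then have bdd: "bdd_below R" by (auto intro: bdd_belowI)
  define \<mu> where "\<mu> = Inf R"
  have mu0: "\<mu> \<ge> 0" unfolding \<mu>_def using Rne Rlb by (intro cInf_greatest) auto
  have key: "qf (\<Psi> x) / qf x \<le> qf (\<Psi> y) / qf y" if x: "qf x < 0" and y: "qf y > 0" for x y
  proof (rule ratio_ineq[OF x y], rule two_d[OF x y])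
    fix s :: real
    assume "qf x * s^2 + 2 * bq x y * s + qf y \<ge> 0"
    then have "qf (s *\<^sub>R x + 1 *\<^sub>R y) \<ge> 0" unfolding qf_comb by (simp add: mult_ac)
    then have "qf (\<Psi> (s *\<^sub>R x + 1 *\<^sub>R y)) \<ge> 0" using qf_pos_map[OF lin pos] by blast
    moreover have "\<Psi> (s *\<^sub>R x + 1 *\<^sub>R y) = s *\<^sub>R \<Psi> x + 1 *\<^sub>R \<Psi> y"
      using lin by (simp add: linear_add linear_scale)
    ultimately show "qf (\<Psi> x) * s^2 + 2 * bq (\<Psi> x) (\<Psi> y) * s + qf (\<Psi> y) \<ge> 0"
      using qf_comb[of s "\<Psi> x" 1 "\<Psi> y"] by (simp add: mult_ac)
  qed
  have "qf (\<Psi> x) \<ge> \<mu> * qf x" for x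
  proof -
    consider "qf x > 0" | "qf x = 0" | "qf x < 0" by linarith
    then show ?thesis
    proof cases
      case 1
      then have "\<mu> \<le> qf (\<Psi> x) / qf x" unfolding \<mu>_def R_def
        using bdd unfolding R_def by (intro cInf_lower) auto
      then show ?thesis using 1 by (simp add: le_divide_eq)
    next
      case 2
      then show ?thesis using qf_pos_map[OF lin pos, of x] by simp
    next
      case 3
      have "qf (\<Psi> x) / qf x \<le> \<mu>" unfolding \<mu>_def
        using Rne key[OF 3] by (intro cInf_greatest) (auto simp: R_def)
      then show ?thesis using 3 by (simp add: divide_le_eq mult.commute)
    qed
  qed
  then show ?thesis using mu0 by blast
qed


lemma linear_funpow:
  fixes \<Psi> :: "'a::real_vector \<Rightarrow> 'a"
  shows "linear \<Psi> \<Longrightarrow> linear (\<Psi> ^^ k)"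
proof (induction k)
  case 0
  show ?case by (simp add: linear_iff)
next
  case (Suc k)
  then have "linear (\<Psi> \<circ> (\<Psi> ^^ k))" using linear_compose by blast
  then show ?case by (simp add: o_def)
qed

lemma pos_funpow:
  assumes "positive_map \<Psi>" "x \<in> lorentz_cone"
  shows "(\<Psi> ^^ k) x \<in> lorentz_cone"
  using assms by (induction k) (auto simp: positive_map_def)

lemma sp_iff:
  assumes "positive_map \<Psi>"
  shows "strictly_positive_map (\<Psi> ^^ k) \<longleftrightarrow> (\<forall>x\<in>lorentz_cone - {0}. qf ((\<Psi> ^^ k) x) > 0)"
  unfolding strictly_positive_map_def using L_int_iff pos_funpow[OF assms] by auto

lemma L_null_pos:
  assumes "x \<in> lorentz_cone" "qf x = 0" "x \<noteq> 0"
  shows "x $ last_idx > 0"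
proof (rule ccontr)
  assume "\<not> x $ last_idx > 0"
  then have l0: "x $ last_idx = 0" using assms(1) L_iff by force
  then have "Sp x = 0" using assms(2) unfolding qf_def by simp
  then have "\<forall>i\<in>UNIV - {last_idx}. (x $ i)^2 = 0" unfolding Sp_def
    by (subst sum_nonneg_eq_0_iff[symmetric]) auto
  then have "x = 0" using l0 by (metis DiffI power_eq_0_iff singletonD UNIV_I vec_eq_iff zero_index)
  then show False using assms(3) by simp
qed

lemma bq_pos:
  assumes a: "a \<in> lorentz_cone" "qf a = 0" "a \<noteq> 0" and c: "c \<in> interior lorentz_cone"
  shows "bq a c > 0"
proof -
  have al: "a $ last_idx > 0" using L_null_pos[OF a] .
  have sa: "sqrt (Sp a) = a $ last_idx" using a(2) al unfolding qf_def
    by (metis abs_of_pos eq_iff_diff_eq_0 real_sqrt_abs)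
  have cl: "sqrt (Sp c) < c $ last_idx" using c interior_L by blast
  have "(\<Sum>i\<in>UNIV - {last_idx}. a $ i * c $ i) \<le> (\<Sum>i\<in>UNIV - {last_idx}. \<bar>a $ i\<bar> * \<bar>c $ i\<bar>)"
    by (intro sum_mono) (simp add: abs_mult[symmetric])
  also have "\<dots> \<le> L2_set (\<lambda>i. a $ i) (UNIV - {last_idx}) * L2_set (\<lambda>i. c $ i) (UNIV - {last_idx})"
    by (rule L2_set_mult_ineq)
  also have "\<dots> = sqrt (Sp a) * sqrt (Sp c)" unfolding L2_set_def Sp_def ..
  finally have "bq a c \<ge> a $ last_idx * c $ last_idx - a $ last_idx * sqrt (Sp c)"
    unfolding bq_def sa by simp
  moreover have "a $ last_idx * c $ last_idx - a $ last_idx * sqrt (Sp c) > 0"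
    using al cl by (simp add: right_diff_distrib[symmetric])
  ultimately show ?thesis by linarith
qed


lemma qf_zero: "qf 0 = 0"
  using qf_scale[of 0 0] by simp

lemma mu_zero_case:
  fixes \<Psi> :: "real^'n::{finite,wellorder} \<Rightarrow> real^'n::{finite,wellorder}"
  assumes lin: "linear \<Psi>" and pos: "positive_map \<Psi>"
    and N: "strictly_positive_map (\<Psi> ^^ N)" "N \<ge> 1"
    and all: "\<And>z. qf (\<Psi> z) \<ge> 0"
  shows "strictly_positive_map (\<Psi> ^^ 1)"
proof -
  have goodN: "\<forall>x\<in>lorentz_cone - {0}. qf ((\<Psi> ^^ N) x) > 0" using N(1) sp_iff[OF pos] by blast
  have "qf (\<Psi> x) > 0" if x: "x \<in> lorentz_cone" "x \<noteq> 0" for x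
  proof (rule ccontr)
    assume nq: "\<not> qf (\<Psi> x) > 0"
    define a where "a = \<Psi> x"
    have aL: "a \<in> lorentz_cone" using x pos unfolding a_def positive_map_def by blast
    then have qa: "qf a = 0" using nq L_iff unfolding a_def by force
    have "N \<noteq> 1" using goodN x nq by auto
    then have "N = Suc (Suc (N - 2))" using N(2) by arith
    then obtain M where M: "N = Suc (Suc M)" by blast
    define w where "w = (\<Psi> ^^ M) a"
    define c where "c = \<Psi> w"
    have e1: "(\<Psi> ^^ Suc M) x = (\<Psi> ^^ M) (\<Psi> x)" by (simp only: funpow_Suc_right o_apply)
    have cN: "c = (\<Psi> ^^ N) x" unfolding c_def w_def a_def M
      using e1 by simp
    have qc: "qf c > 0" using goodN x cN by auto
    have cL: "c \<in> lorentz_cone" unfolding cN using pos_funpow[OF pos x(1)] .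
    have cI: "c \<in> interior lorentz_cone" using L_int_iff[OF cL] qc by blast
    have a0: "a \<noteq> 0"
    proof
      assume "a = 0"
      then have "c = 0" unfolding c_def w_def
        using linear_0[OF linear_funpow[OF lin]] linear_0[OF lin] by simp
      then show False using qc by (simp add: qf_zero)
    qed
    define B where "B = bq a c"
    have B: "B > 0" unfolding B_def using bq_pos[OF aL qa a0 cI] .
    define t where "t = - B / (qf c + 1)"
    have t: "t < 0" unfolding t_def using B qc by (simp add: divide_pos_pos)
    have "t * qf c > - B" unfolding t_def using B qc
      by (simp add: field_simps)
    then have "2 * B + t * qf c > 0" using B by linarith
    then have neg: "t * (2 * B + t * qf c) < 0" using t by (simp add: mult_neg_pos)
    have "qf (1 *\<^sub>R a + t *\<^sub>R c) = t * (2 * B + t * qf c)"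
      unfolding qf_comb B_def qa by (simp add: power2_eq_square algebra_simps)
    moreover have "1 *\<^sub>R a + t *\<^sub>R c = \<Psi> (x + t *\<^sub>R w)"
      unfolding a_def c_def using lin by (simp add: linear_add linear_scale)
    ultimately show False using all[of "x + t *\<^sub>R w"] neg by simp
  qed
  then show ?thesis using sp_iff[OF pos, of 1] by simp
qed


lemma mu_pos_case:
  fixes \<Psi> :: "real^'n::{finite,wellorder} \<Rightarrow> real^'n::{finite,wellorder}"
  assumes lin: "linear \<Psi>" and pos: "positive_map \<Psi>"
    and N: "strictly_positive_map (\<Psi> ^^ N)"
    and mu: "\<mu> > 0" and hmu: "\<And>z. qf (\<Psi> z) \<ge> \<mu> * qf z"
  shows "strictly_positive_map (\<Psi> ^^ CARD('n))"
proof -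
  define n where "n = CARD('n)"
  define m where "m z = qf (\<Psi> z) - \<mu> * qf z" for z
  define bm where "bm z y = bq (\<Psi> z) (\<Psi> y) - \<mu> * bq z y" for z y
  have mnn: "m z \<ge> 0" for z unfolding m_def using hmu[of z] by simp
  have mcomb: "m (s *\<^sub>R z + t *\<^sub>R y) = s^2 * m z + 2 * s * t * bm z y + t^2 * m y" for s t z y
  proof -
    have "\<Psi> (s *\<^sub>R z + t *\<^sub>R y) = s *\<^sub>R \<Psi> z + t *\<^sub>R \<Psi> y"
      using lin by (simp add: linear_add linear_scale)
    then show ?thesis unfolding m_def bm_def
      using qf_comb[of s "\<Psi> z" t "\<Psi> y"] qf_comb[of s z t y] by (simp add: algebra_simps)
  qed
  define K where "K = {z. m z = 0}"
  have Ksub: "subspace K"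
  proof (rule subspaceI)
    show "0 \<in> K" unfolding K_def m_def using lin by (simp add: linear_0 qf_zero)
  next
    fix z y assume z: "z \<in> K" and y: "y \<in> K"
    have "m (1 *\<^sub>R z + 1 *\<^sub>R y) = 2 * bm z y" using mcomb[of 1 z 1 y] z y by (simp add: K_def)
    moreover have "m (1 *\<^sub>R z + (-1) *\<^sub>R y) = - 2 * bm z y" using mcomb[of 1 z "-1" y] z y by (simp add: K_def)
    ultimately have "bm z y = 0" using mnn[of "1 *\<^sub>R z + 1 *\<^sub>R y"] mnn[of "1 *\<^sub>R z + (-1) *\<^sub>R y"] by linarith
    then show "z + y \<in> K" using mcomb[of 1 z 1 y] z y by (simp add: K_def)
  next
    fix c z assume z: "z \<in> K"
    show "c *\<^sub>R z \<in> K" using mcomb[of c z 0 z] z by (simp add: K_def)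
  qed
  define V where "V k = {z. \<forall>j<k. (\<Psi> ^^ j) z \<in> K}" for k
  have Vsub: "subspace (V k)" for k
  proof (rule subspaceI)
    show "0 \<in> V k" unfolding V_def using linear_0[OF linear_funpow[OF lin]] Ksub
      by (simp add: subspace_0)
  next
    fix z y assume "z \<in> V k" "y \<in> V k"
    then show "z + y \<in> V k" unfolding V_def
      using linear_add[OF linear_funpow[OF lin]] Ksub by (simp add: subspace_add)
  next
    fix c z assume "z \<in> V k"
    then show "c *\<^sub>R z \<in> V k" unfolding V_def
      using linear_scale[OF linear_funpow[OF lin]] Ksub by (simp add: subspace_scale)
  qed
  have Vsuc: "z \<in> V (Suc k) \<longleftrightarrow> z \<in> K \<and> \<Psi> z \<in> V k" for z k
  proof -
    have "(\<forall>j<Suc k. (\<Psi> ^^ j) z \<in> K) \<longleftrightarrow> (\<Psi> ^^ 0) z \<in> K \<and> (\<forall>j<k. (\<Psi> ^^ Suc j) z \<in> K)"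
      by (rule All_less_Suc2)
    moreover have "(\<Psi> ^^ Suc j) z = (\<Psi> ^^ j) (\<Psi> z)" for j by (simp only: funpow_Suc_right o_apply)
    ultimately show ?thesis unfolding V_def by simp
  qed
  have Vanti: "k \<le> k' \<Longrightarrow> V k' \<subseteq> V k" for k k' unfolding V_def by auto
  have posprop: "qf ((\<Psi> ^^ k) y) > 0" if "qf y > 0" for k y
  proof (induction k)
    case 0 then show ?case using that by simp
  next
    case (Suc k)
    have "qf ((\<Psi> ^^ Suc k) y) \<ge> \<mu> * qf ((\<Psi> ^^ k) y)" using hmu by simp
    moreover have "\<mu> * qf ((\<Psi> ^^ k) y) > 0" using Suc mu by simp
    ultimately show ?case by linarith
  qed
  have fb: "qf ((\<Psi> ^^ k) z) = 0" if "z \<in> V k" "qf z = 0" for k z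
    using that
  proof (induction k)
    case 0 then show ?case by simp
  next
    case (Suc k)
    have "V (Suc k) \<subseteq> V k" using Vanti by simp
    then have q0: "qf ((\<Psi> ^^ k) z) = 0" using Suc by blast
    have "(\<Psi> ^^ k) z \<in> K" using Suc.prems(1) unfolding V_def by blast
    then have "m ((\<Psi> ^^ k) z) = 0" unfolding K_def by simp
    then show ?case using q0 unfolding m_def by simp
  qed
  have fc: "z \<in> V k" if z: "z \<in> lorentz_cone" "qf z = 0" "qf ((\<Psi> ^^ k) z) = 0" for k z
  proof -
    have allz: "qf ((\<Psi> ^^ i) z) = 0" if "i \<le> k" for i
    proof (rule ccontr)
      assume "qf ((\<Psi> ^^ i) z) \<noteq> 0"
      moreover have "qf ((\<Psi> ^^ i) z) \<ge> 0" using pos_funpow[OF pos z(1)] L_iff by blast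
      ultimately have "qf ((\<Psi> ^^ (k - i)) ((\<Psi> ^^ i) z)) > 0" using posprop by simp
      moreover have "(\<Psi> ^^ (k - i)) ((\<Psi> ^^ i) z) = (\<Psi> ^^ (k - i + i)) z"
        by (simp only: funpow_add o_apply)
      moreover have "k - i + i = k" using that by simp
      ultimately show False using z(3) by simp
    qed
    show ?thesis unfolding V_def K_def
    proof (intro CollectI allI impI)
      fix j assume "j < k"
      then have "qf ((\<Psi> ^^ j) z) = 0" "qf ((\<Psi> ^^ Suc j) z) = 0" using allz[of j] allz[of "Suc j"] by auto
      then show "m ((\<Psi> ^^ j) z) = 0" unfolding m_def by simp
    qed
  qed
  have badN: "\<not> (v \<in> lorentz_cone - {0} \<and> qf v = 0 \<and> v \<in> V N)" for v
  proof
    assume v: "v \<in> lorentz_cone - {0} \<and> qf v = 0 \<and> v \<in> V N"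
    then have "qf ((\<Psi> ^^ N) v) = 0" using fb by blast
    then show False using N sp_iff[OF pos] v by force
  qed
  show ?thesis
  proof (rule ccontr)
    assume "\<not> strictly_positive_map (\<Psi> ^^ CARD('n))"
    then obtain v where v: "v \<in> lorentz_cone" "v \<noteq> 0" "\<not> qf ((\<Psi> ^^ n) v) > 0"
      using sp_iff[OF pos] unfolding n_def by blast
    have "qf ((\<Psi> ^^ n) v) \<ge> 0" using pos_funpow[OF pos v(1)] L_iff by blast
    then have qn: "qf ((\<Psi> ^^ n) v) = 0" using v(3) by linarith
    have qv: "qf v = 0"
    proof (rule ccontr)
      assume "qf v \<noteq> 0"
      then have "qf v > 0" using v(1) L_iff by force
      then show False using posprop[of v n] qn by simp
    qed
    have vV: "v \<in> V n" using fc[OF v(1) qv qn] .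
    have strict: "V (Suc j) \<noteq> V j" if "j < n" for j
    proof
      assume eq: "V (Suc j) = V j"
      have stab: "V (j + i) = V j" for i
      proof (induction i)
        case 0 then show ?case by simp
      next
        case (Suc i)
        have "V (j + Suc i) = {z. z \<in> K \<and> \<Psi> z \<in> V (j + i)}" using Vsuc[of _ "j + i"] by auto
        also have "\<dots> = {z. z \<in> K \<and> \<Psi> z \<in> V j}" using Suc by simp
        also have "\<dots> = V (Suc j)" using Vsuc[of _ j] by auto
        finally show ?case using eq by simp
      qed
      have "v \<in> V N"
      proof (cases "N \<le> n")
        case True then show ?thesis using Vanti[OF True] vV by blast
      next
        case False
        then have "V N = V j" using stab[of "N - j"] that by simp
        then show ?thesis using Vanti[of j n] that vV by auto
      qed
      then show False using badN[of v] v qv by blast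
    qed
    have dimdec: "dim (V j) + j \<le> n" if "j \<le> n" for j
      using that
    proof (induction j)
      case 0
      have "V 0 = UNIV" unfolding V_def by simp
      then show ?case unfolding n_def by simp
    next
      case (Suc j)
      have "V (Suc j) \<subseteq> V j" using Vanti by simp
      then have "V (Suc j) \<subset> V j" using strict[of j] Suc.prems by auto
      then have "span (V (Suc j)) \<subset> span (V j)" using Vsub by (simp add: span_eq_iff[THEN iffD2])
      then have "dim (V (Suc j)) < dim (V j)" by (rule dim_psubset)
      then show ?case using Suc by simp
    qed
    have "dim (V n) = 0" using dimdec[of n] by simp
    then have "V n \<subseteq> {0}" by simp
    then show False using vV v(2) by blast
  qed
qed


lemma example_ge2:
  fixes e :: "nat \<Rightarrow> 'n::{finite,wellorder}"
  assumes bij: "bij_betw e {..<Suc d} (UNIV - {last_idx})"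
    and card: "CARD('n) = Suc (Suc d)"
  shows "\<exists>\<Psi> :: real^'n::{finite,wellorder} \<Rightarrow> real^'n::{finite,wellorder}. linear \<Psi> \<and> primitive_map \<Psi> \<and> primitivity_index \<Psi> = CARD('n::{finite,wellorder})"
proof -
  define t where "t x = x $ last_idx" for x :: "real^'n::{finite,wellorder}"
  define z where "z x r = x $ e r" for x :: "real^'n::{finite,wellorder}" and r
  define c where "c x r = (if r = 0 then z x 0 - t x else z x r)" for x r
  define ie where "ie = inv_into {..<Suc d} e"
  define \<Psi> where "\<Psi> x = (\<chi> i. if i = last_idx then (3 * t x - z x 0) / 2
      else if ie i = 0 then - (t x + z x 0) / 2 else c x (ie i - 1))" for x
  have el: "e r \<noteq> last_idx" if "r < Suc d" for r
    using bij_betw_apply[OF bij, of r] that by auto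
  have einv: "ie (e r) = r" if "r < Suc d" for r
    unfolding ie_def using bij_betw_imp_inj_on[OF bij] that by (simp add: inv_into_f_f)
  have esurj: "\<exists>r<Suc d. i = e r" if "i \<noteq> last_idx" for i
    using bij that unfolding bij_betw_def by (metis Diff_iff UNIV_I image_iff lessThan_iff singletonD)
  have Psi_l: "t (\<Psi> x) = (3 * t x - z x 0) / 2" for x
    unfolding \<Psi>_def t_def by simp
  have Psi_0: "z (\<Psi> x) 0 = - (t x + z x 0) / 2" for x
    using el[of 0] einv[of 0] unfolding \<Psi>_def z_def t_def by simp
  have Psi_S: "z (\<Psi> x) (Suc r) = c x r" if "r < d" for x r
    using el[of "Suc r"] einv[of "Suc r"] that unfolding \<Psi>_def z_def[of _ "Suc r"] by simp
  have c_Psi0: "c (\<Psi> x) 0 = - 2 * t x" for x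
    unfolding c_def using Psi_0[of x] Psi_l[of x] by simp
  have c_PsiS: "c (\<Psi> x) (Suc r) = c x r" if "r < d" for x r
    using Psi_S[OF that] unfolding c_def by simp
  have lin: "linear \<Psi>"
    by (rule linearI) (auto simp: vec_eq_iff \<Psi>_def t_def z_def c_def algebra_simps diff_divide_distrib add_divide_distrib)
  have Spz: "Sp x = (\<Sum>r<Suc d. (z x r)^2)" for x
    unfolding Sp_def z_def using sum.reindex_bij_betw[OF bij, of "\<lambda>i. (x $ i)^2"] by simp
  have key: "qf (\<Psi> x) = qf x + (c x d)^2" for x
  proof -
    define A where "A = (\<Sum>r<d. (c x r)^2)"
    define Bz where "Bz = (\<Sum>r<d. (z x (Suc r))^2)"
    have "(\<Sum>r<Suc d. (c x r)^2) = A + (c x d)^2" unfolding A_def by simp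
    moreover have "(\<Sum>r<Suc d. (c x r)^2) = (z x 0 - t x)^2 + Bz"
      unfolding Bz_def sum.lessThan_Suc_shift c_def by simp
    ultimately have A: "A = (z x 0 - t x)^2 + Bz - (c x d)^2" by simp
    have qx: "qf x = (t x)^2 - (z x 0)^2 - Bz"
      unfolding qf_def Spz Bz_def sum.lessThan_Suc_shift t_def by simp
    have "(\<Sum>r<Suc d. (z (\<Psi> x) r)^2) = (z (\<Psi> x) 0)^2 + (\<Sum>r<d. (z (\<Psi> x) (Suc r))^2)"
      by (rule sum.lessThan_Suc_shift)
    also have "(\<Sum>r<d. (z (\<Psi> x) (Suc r))^2) = A" unfolding A_def using Psi_S by simp
    finally have S: "Sp (\<Psi> x) = (z (\<Psi> x) 0)^2 + A" unfolding Spz .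
    have "qf (\<Psi> x) = (t (\<Psi> x))^2 - Sp (\<Psi> x)" unfolding qf_def t_def ..
    also have "\<dots> = ((3 * t x - z x 0) / 2)^2 - ((t x + z x 0) / 2)^2 - A"
      unfolding S Psi_l[of x] Psi_0[of x] by (simp add: power2_eq_square algebra_simps)
    finally have "qf (\<Psi> x) = ((3 * t x - z x 0) / 2)^2 - ((t x + z x 0) / 2)^2 - A" .
    then show ?thesis unfolding A qx by (simp add: power2_eq_square field_simps)
  qed
  have iter: "qf ((\<Psi> ^^ k) x) = qf x + (\<Sum>j<k. (c ((\<Psi> ^^ j) x) d)^2)" for k x
    by (induction k) (simp_all add: key)
  have posPsi: "\<Psi> x \<in> lorentz_cone" if x: "x \<in> lorentz_cone" for x
  proof -
    have t0: "t x \<ge> 0" and q0: "qf x \<ge> 0" using x L_iff unfolding t_def by auto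
    have "(z x 0)^2 \<le> (\<Sum>r<Suc d. (z x r)^2)" by (rule member_le_sum) auto
    then have "(z x 0)^2 \<le> (t x)^2" using q0 unfolding qf_def Spz t_def by simp
    then have "\<bar>z x 0\<bar> \<le> t x" using t0 power2_le_imp_le[of "\<bar>z x 0\<bar>" "t x"] by simp
    then have "t (\<Psi> x) \<ge> 0" unfolding Psi_l by simp
    moreover have "qf (\<Psi> x) \<ge> 0" using key[of x] q0 by simp
    ultimately show ?thesis using L_iff unfolding t_def by blast
  qed
  have pos: "positive_map \<Psi>" unfolding positive_map_def using posPsi by blast
  have cshift: "c ((\<Psi> ^^ j) y) d = c y (d - j)" if "j \<le> d" for j y
    using that
  proof (induction j arbitrary: y)
    case 0 then show ?case by simp
  next
    case (Suc j)
    have "(\<Psi> ^^ Suc j) y = (\<Psi> ^^ j) (\<Psi> y)" by (simp only: funpow_Suc_right o_apply)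
    then have "c ((\<Psi> ^^ Suc j) y) d = c (\<Psi> y) (d - j)" using Suc by simp
    also have "d - j = Suc (d - Suc j)" using Suc.prems by simp
    also have "c (\<Psi> y) (Suc (d - Suc j)) = c y (d - Suc j)" using Suc.prems by (intro c_PsiS) simp
    finally show ?case .
  qed
  have clast: "c ((\<Psi> ^^ Suc d) y) d = - 2 * t y" for y
  proof -
    have "(\<Psi> ^^ Suc d) y = (\<Psi> ^^ d) (\<Psi> y)" by (simp only: funpow_Suc_right o_apply)
    then show ?thesis using cshift[of d "\<Psi> y"] c_Psi0 by simp
  qed
  have triv: "x = 0" if h: "\<forall>j<Suc (Suc d). c ((\<Psi> ^^ j) x) d = 0" for x
  proof -
    have cr: "c x r = 0" if "r \<le> d" for r
      using h[rule_format, of "d - r"] cshift[of "d - r" x] that by simp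
    have tx: "t x = 0" using h[rule_format, of "Suc d"] clast[of x] by simp
    have zr: "z x r = 0" if "r < Suc d" for r
      using cr[of r] tx that unfolding c_def by (cases "r = 0") auto
    show ?thesis
    proof (rule vec_eq_iff[THEN iffD2], rule allI)
      fix i
      show "x $ i = 0 $ i"
      proof (cases "i = last_idx")
        case True then show ?thesis using tx unfolding t_def by simp
      next
        case False
        then obtain r where "r < Suc d" "i = e r" using esurj by blast
        then show ?thesis using zr unfolding z_def by simp
      qed
    qed
  qed
  define x0 :: "real^'n::{finite,wellorder}" where "x0 = (\<chi> i. if i = last_idx \<or> i = e 0 then 1 else 0)"
  have tx0: "t x0 = 1" unfolding x0_def t_def by simp
  have zx0: "z x0 0 = 1" unfolding x0_def z_def by simp
  have zx0S: "z x0 r = 0" if "0 < r" "r < Suc d" for r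
  proof -
    have "e r \<noteq> e 0" using bij_betw_imp_inj_on[OF bij] that unfolding inj_on_def by force
    then show ?thesis using el[OF that(2)] unfolding x0_def z_def by simp
  qed
  have cx0: "c x0 r = 0" if "r \<le> d" for r
    using zx0 tx0 zx0S[of r] that unfolding c_def by auto
  have x0L: "x0 \<in> lorentz_cone" and qx0: "qf x0 = 0"
  proof -
    have "(\<Sum>r<Suc d. (z x0 r)^2) = 1"
      unfolding sum.lessThan_Suc_shift using zx0 zx0S by simp
    then show "qf x0 = 0" unfolding qf_def Spz using tx0 unfolding t_def by simp
    then show "x0 \<in> lorentz_cone" using tx0 unfolding t_def by (simp add: L_iff)
  qed
  have x00: "x0 \<noteq> 0" using tx0 unfolding t_def by auto
  have chain: "\<forall>r. j \<le> r \<and> r \<le> d \<longrightarrow> c ((\<Psi> ^^ j) x0) r = 0" if "j \<le> d" for j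
    using that
  proof (induction j)
    case 0 then show ?case using cx0 by simp
  next
    case (Suc j)
    show ?case
    proof (intro allI impI)
      fix r assume r: "Suc j \<le> r \<and> r \<le> d"
      then obtain r' where r': "r = Suc r'" "r' < d" by (metis Suc_le_D Suc_le_lessD)
      have "c ((\<Psi> ^^ Suc j) x0) r = c (\<Psi> ((\<Psi> ^^ j) x0)) (Suc r')" using r' by simp
      also have "\<dots> = c ((\<Psi> ^^ j) x0) r'" using c_PsiS[OF r'(2)] .
      also have "\<dots> = 0" using Suc r r' by simp
      finally show "c ((\<Psi> ^^ Suc j) x0) r = 0" .
    qed
  qed
  have notsp: "\<not> strictly_positive_map (\<Psi> ^^ k)" if "k \<le> Suc d" for k
  proof -
    have "(\<Sum>j<k. (c ((\<Psi> ^^ j) x0) d)^2) = 0"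
      using chain that by (intro sum.neutral) auto
    then have "qf ((\<Psi> ^^ k) x0) = 0" using iter qx0 by simp
    then show ?thesis using sp_iff[OF pos] x0L x00 by force
  qed
  have sp: "strictly_positive_map (\<Psi> ^^ Suc (Suc d))"
    unfolding sp_iff[OF pos]
  proof
    fix x :: "real^'n::{finite,wellorder}" assume x: "x \<in> lorentz_cone - {0}"
    have qx: "qf x \<ge> 0" using x L_iff by blast
    have S: "(\<Sum>j<Suc (Suc d). (c ((\<Psi> ^^ j) x) d)^2) \<ge> 0" by (intro sum_nonneg) simp
    show "qf ((\<Psi> ^^ Suc (Suc d)) x) > 0"
    proof (rule ccontr)
      assume "\<not> ?thesis"
      then have "qf x + (\<Sum>j<Suc (Suc d). (c ((\<Psi> ^^ j) x) d)^2) = 0" using iter[of "Suc (Suc d)" x] qx S by linarith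
      then have "(\<Sum>j<Suc (Suc d). (c ((\<Psi> ^^ j) x) d)^2) = 0" using qx S by linarith
      then have "\<forall>j\<in>{..<Suc (Suc d)}. (c ((\<Psi> ^^ j) x) d)^2 = 0"
        by (subst sum_nonneg_eq_0_iff[symmetric]) auto
      then have "x = 0" using triv by simp
      then show False using x by simp
    qed
  qed
  have prim: "primitive_map \<Psi>" unfolding primitive_map_def using pos sp by (intro conjI exI[of _ "Suc (Suc d)"]) auto
  have idx: "primitivity_index \<Psi> = Suc (Suc d)"
    unfolding primitivity_index_def
  proof (rule Least_equality)
    show "1 \<le> Suc (Suc d) \<and> strictly_positive_map (\<Psi> ^^ Suc (Suc d))" using sp by simp
  next
    fix k assume "1 \<le> k \<and> strictly_positive_map (\<Psi> ^^ k)"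
    then show "Suc (Suc d) \<le> k" using notsp by (meson not_less_eq_eq)
  qed
  show ?thesis using lin prim idx card by auto
qed


lemma card_ge1: "CARD('n::{finite,wellorder}) \<ge> 1"
  by (simp add: Suc_leI finite_UNIV_card_ge_0)

lemma upper_bound:
  fixes \<Psi> :: "real^'n::{finite,wellorder} \<Rightarrow> real^'n::{finite,wellorder}"
  assumes lin: "linear \<Psi>" and prim: "primitive_map \<Psi>"
  shows "primitivity_index \<Psi> \<le> CARD('n::{finite,wellorder})"
proof -
  have pos: "positive_map \<Psi>" using prim unfolding primitive_map_def by blast
  obtain N where N: "N \<ge> 1" "strictly_positive_map (\<Psi> ^^ N)"
    using prim unfolding primitive_map_def by blast
  obtain \<mu> where mu: "\<mu> \<ge> 0" "\<And>x. qf (\<Psi> x) \<ge> \<mu> * qf x"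
    using S_lemma[OF lin pos] by blast
  have "\<exists>k. 1 \<le> k \<and> k \<le> CARD('n) \<and> strictly_positive_map (\<Psi> ^^ k)"
  proof (cases "\<mu> = 0")
    case True
    then have "\<And>z. qf (\<Psi> z) \<ge> 0" using mu(2) by (metis mult_zero_left)
    then have "strictly_positive_map (\<Psi> ^^ 1)" using mu_zero_case[OF lin pos N(2) N(1)] by blast
    then show ?thesis using card_ge1 by blast
  next
    case False
    then have "\<mu> > 0" using mu(1) by simp
    then have "strictly_positive_map (\<Psi> ^^ CARD('n))" using mu_pos_case[OF lin pos N(2)] mu(2) by blast
    then show ?thesis using card_ge1 by blast
  qed
  then obtain k where k: "1 \<le> k" "k \<le> CARD('n)" "strictly_positive_map (\<Psi> ^^ k)" by blast
  have "primitivity_index \<Psi> \<le> k" unfolding primitivity_index_def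
    by (rule Least_le) (use k in simp)
  then show ?thesis using k(2) by simp
qed

lemma example_exists:
  "\<exists>\<Psi> :: real^'n::{finite,wellorder} \<Rightarrow> real^'n::{finite,wellorder}.
     linear \<Psi> \<and> primitive_map \<Psi> \<and> primitivity_index \<Psi> = CARD('n::{finite,wellorder})"
proof (cases "CARD('n) = 1")
  case True
  then obtain a :: 'n where UA: "UNIV = {a}" using card_1_singletonE by blast
  then have la: "last_idx = (a::'n)" by blast
  have emp: "UNIV - {last_idx::'n} = {}" using UA la by simp
  define I :: "real^'n::{finite,wellorder} \<Rightarrow> real^'n::{finite,wellorder}" where "I = (\<lambda>x. x)"
  have lin: "linear I" unfolding I_def by (simp add: linear_iff)
  have pos: "positive_map I" unfolding positive_map_def I_def by simp
  have sp: "strictly_positive_map (I ^^ 1)"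
    unfolding sp_iff[OF pos]
  proof
    fix x :: "real^'n::{finite,wellorder}" assume x: "x \<in> lorentz_cone - {0}"
    have "x $ last_idx \<noteq> 0"
    proof
      assume x0: "x $ last_idx = 0"
      have ii: "i = last_idx" for i :: 'n using UA la by blast
      have "x = 0" unfolding vec_eq_iff
      proof
        fix i :: 'n show "x $ i = 0 $ i" using ii[of i] x0 by simp
      qed
      then show False using x by simp
    qed
    then show "qf ((I ^^ 1) x) > 0" unfolding qf_def Sp_def emp I_def by simp
  qed
  have ex1: "\<exists>k::nat. k \<ge> 1 \<and> strictly_positive_map (I ^^ k)"
    using sp by (intro exI[of _ 1]) simp
  have prim: "primitive_map I" unfolding primitive_map_def using pos ex1 by (rule conjI)
  have idx: "primitivity_index I = 1" unfolding primitivity_index_def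
  proof (rule Least_equality)
    show "1 \<le> (1::nat) \<and> strictly_positive_map (I ^^ 1)" using sp by simp
  qed simp
  show ?thesis by (rule exI[of _ I]) (simp add: lin prim idx True)
next
  case False
  then have ge2: "CARD('n) \<ge> 2" using card_ge1[where 'n='n] by linarith
  define d where "d = CARD('n) - 2"
  have cd: "CARD('n) = Suc (Suc d)" unfolding d_def using ge2 by simp
  have "card (UNIV - {last_idx::'n}) = Suc d" using cd by (simp add: card_Diff_singleton)
  then obtain e :: "nat \<Rightarrow> 'n" where "bij_betw e {0..<Suc d} (UNIV - {last_idx})"
    using ex_bij_betw_nat_finite[of "UNIV - {last_idx::'n}"] by auto
  then have "bij_betw e {..<Suc d} (UNIV - {last_idx})" by (simp add: atLeast0LessThan)
  then show ?thesis by (rule example_ge2[OF _ cd])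
qed

theorem theorem1:
  shows "(\<forall>\<Psi> :: real^('n::{finite,wellorder}) \<Rightarrow> real^('n::{finite,wellorder}).
            linear \<Psi> \<and> primitive_map \<Psi> \<longrightarrow> primitivity_index \<Psi> \<le> CARD('n::{finite,wellorder}))
       \<and> (\<exists>\<Psi> :: real^('n::{finite,wellorder}) \<Rightarrow> real^('n::{finite,wellorder}).
            linear \<Psi> \<and> primitive_map \<Psi> \<and> primitivity_index \<Psi> = CARD('n::{finite,wellorder}))"
proof (intro conjI allI impI)
  fix \<Psi> :: "real^('n::{finite,wellorder}) \<Rightarrow> real^('n::{finite,wellorder})"
  assume "linear \<Psi> \<and> primitive_map \<Psi>"
  then show "primitivity_index \<Psi> \<le> CARD('n)" using upper_bound by blast
next
  show "\<exists>\<Psi> :: real^('n::{finite,wellorder}) \<Rightarrow> real^('n::{finite,wellorder}).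
            linear \<Psi> \<and> primitive_map \<Psi> \<and> primitivity_index \<Psi> = CARD('n::{finite,wellorder})"
    by (rule example_exists)
qed

end
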